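(* Suppose $c_1\ge-1$, $c_2\ge-1$, $c_3>\bar c_3(c_1,c_2)$. Let $U^+$ be the real analytic solution, on some interval $(-1,-1+\delta)$, of $(1-x^2)U'+2xU+\frac12U^2=P_c(x)$ given by a power series $\tau_2(c_1)+\sum_{n\ge1}a_n(1+x)^n$ (so $U^+(-1)=\tau_2(c_1)$). Then $U^+$ extends to a solution of the equation in $(-1,1)$ and $U^+(1)=\tau_2'(c_2)$. Similarly, let $U^-$ be the real analytic solution on some interval $(1-\delta,1)$ given by a power series $\tau_1'(c_2)+\sum_{n\ge1}b_n(1-x)^n$ (so $U^-(1)=\tau_1'(c_2)$). Then $U^-$ extends to a solution in $(-1,1)$ and $U^-(-1)=\tau_1(c_1)$. Moreover $U^-<U^+$ in $(-1,1)$.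
   Context: $P_c(x):=c_1(1-x)+c_2(1+x)+c_3(1-x^2)$ for $c=(c_1,c_2,c_3)$; $\bar c_3(c_1,c_2):=-\frac12(\sqrt{1+c_1}+\sqrt{1+c_2})(\sqrt{1+c_1}+\sqrt{1+c_2}+2)$. $\tau_1(c_1):=2-2\sqrt{1+c_1}$, $\tau_2(c_1):=2+2\sqrt{1+c_1}$, $\tau_1'(c_2):=-2-2\sqrt{1+c_2}$, $\tau_2'(c_2):=-2+2\sqrt{1+c_2}$. For $c_1\ge-1$ there is a unique power-series (real analytic) local solution near $x=-1$ with value $\tau_2(c_1)$ at $-1$, and for $c_2\ge-1$ a unique one near $x=1$ with value $\tau_1'(c_2)$ at $1$. Boundary values $U(\pm1)$ denote one-sided limits. *)

theory Defs
  imports "HOL-Analysis.Analysis"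
begin

definition Pc :: "real \<Rightarrow> real \<Rightarrow> real \<Rightarrow> real \<Rightarrow> real" where
  "Pc c1 c2 c3 x = c1 * (1 - x) + c2 * (1 + x) + c3 * (1 - x^2)"

definition c3bar :: "real \<Rightarrow> real \<Rightarrow> real" where
  "c3bar c1 c2 = - (1/2) * (sqrt (1 + c1) + sqrt (1 + c2)) * (sqrt (1 + c1) + sqrt (1 + c2) + 2)"

definition tau1 :: "real \<Rightarrow> real" where "tau1 c1 = 2 - 2 * sqrt (1 + c1)"
definition tau2 :: "real \<Rightarrow> real" where "tau2 c1 = 2 + 2 * sqrt (1 + c1)"
definition tau1' :: "real \<Rightarrow> real" where "tau1' c2 = -2 - 2 * sqrt (1 + c2)"
definition tau2' :: "real \<Rightarrow> real" where "tau2' c2 = -2 + 2 * sqrt (1 + c2)"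

definition solves_on :: "real \<Rightarrow> real \<Rightarrow> real \<Rightarrow> (real \<Rightarrow> real) \<Rightarrow> real set \<Rightarrow> bool" where
  "solves_on c1 c2 c3 U S \<longleftrightarrow>
     (\<forall>x\<in>S. \<exists>D. (U has_real_derivative D) (at x) \<and>
        (1 - x^2) * D + 2 * x * U x + (U x)^2 / 2 = Pc c1 c2 c3 x)"

end

theory Submission
  imports Defs
begin

definition conv1 :: "(nat \<Rightarrow> real) \<Rightarrow> bool" where
  "conv1 g \<longleftrightarrow> (\<forall>z::real. \<bar>z\<bar> < 1 \<longrightarrow> summable (\<lambda>n. g n * z^n))"

lemma conv1_mult_n:
  assumes "conv1 g" shows "conv1 (\<lambda>n. real n * g n)"
  unfolding conv1_def
proof (intro allI impI)
  fix z :: real assume z: "\<bar>z\<bar> < 1"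
  have s: "summable (\<lambda>n. diffs g n * z^n)"
    by (rule termdiff_converges[where K=1]) (use assms z in \<open>auto simp: conv1_def\<close>)
  hence "summable (\<lambda>n. z * (diffs g n * z^n))" by (rule summable_mult)
  hence "summable (\<lambda>n. real (Suc n) * g (Suc n) * z^(Suc n))"
    by (simp add: diffs_def algebra_simps)
  thus "summable (\<lambda>n. real n * g n * z^n)"
    by (subst summable_Suc_iff[symmetric]) simp
qed

lemma ps_deriv:
  assumes "conv1 g" "\<bar>z\<bar> < 1"
  shows "((\<lambda>z. \<Sum>n. g n * z^n) has_real_derivative (\<Sum>n. diffs g n * z^n)) (at z)"
proof -
  have "((\<lambda>z. \<Sum>n. g n * z^n) has_field_derivative (\<Sum>n. diffs g n * z^n)) (at z)"
    by (rule termdiffs_strong'[where K=1]) (use assms in \<open>auto simp: conv1_def\<close>)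
  thus ?thesis by simp
qed

lemma ps_deriv_euler:
  assumes "conv1 g" "\<bar>z\<bar> < 1"
  shows "z * (\<Sum>n. diffs g n * z^n) = (\<Sum>n. real n * g n * z^n)"
proof -
  have s: "summable (\<lambda>n. diffs g n * z^n)"
    by (rule termdiff_converges[where K=1]) (use assms in \<open>auto simp: conv1_def\<close>)
  have "(\<lambda>n. z * (diffs g n * z^n)) sums (z * (\<Sum>n. diffs g n * z^n))"
    by (rule sums_mult[OF summable_sums[OF s]])
  hence "(\<lambda>n. (\<lambda>n. real n * g n * z^n) (Suc n)) sums (z * (\<Sum>n. diffs g n * z^n))"
    by (simp add: diffs_def algebra_simps)
  hence "(\<lambda>n. real n * g n * z^n) sums (z * (\<Sum>n. diffs g n * z^n))"
    by (subst (asm) sums_Suc_iff) simp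
  thus ?thesis by (simp add: sums_iff)
qed

fun hc :: "real \<Rightarrow> real \<Rightarrow> real \<Rightarrow> nat \<Rightarrow> real" where
  "hc p r c 0 = 1"
| "hc p r c (Suc n) = hc p r c n * ((real n ^ 2 + p * real n + r) / ((real n + c) * (real n + 1)))"

lemma hc_pos:
  assumes "p \<ge> 0" "r > 0" "c > 0" shows "hc p r c n > 0"
proof (induction n)
  case (Suc n)
  have "real n ^ 2 + p * real n + r > 0" using assms by (intro add_nonneg_pos) auto
  moreover have "(real n + c) * (real n + 1) > 0" using assms by (intro mult_pos_pos) auto
  ultimately show ?case using Suc by (simp add: divide_pos_pos)
qed simp

lemma hc_conv:
  assumes p: "p \<ge> 0" and r: "r > 0" and c: "c \<ge> 1" shows "conv1 (hc p r c)"
  unfolding conv1_def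
proof (intro allI impI)
  fix z :: real assume z: "\<bar>z\<bar> < 1"
  define q where "q = (1 + \<bar>z\<bar>)/2"
  define N where "N = nat \<lceil>2*(p+r)/(1-\<bar>z\<bar>)\<rceil> + 1"
  show "summable (\<lambda>n. hc p r c n * z^n)"
  proof (rule summable_ratio_test[where c=q and N=N])
    show "q < 1" using z by (simp add: q_def)
    fix n assume n: "n \<ge> N"
    have n1: "real n \<ge> 1" using n by (simp add: N_def)
    have nb: "real n \<ge> 2*(p+r)/(1-\<bar>z\<bar>)"
    proof -
      have "2*(p+r)/(1-\<bar>z\<bar>) \<le> real (nat \<lceil>2*(p+r)/(1-\<bar>z\<bar>)\<rceil>)" by (rule real_nat_ceiling_ge)
      also have "nat \<lceil>2*(p+r)/(1-\<bar>z\<bar>)\<rceil> \<le> n" using n unfolding N_def by linarith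
      hence "real (nat \<lceil>2*(p+r)/(1-\<bar>z\<bar>)\<rceil>) \<le> real n" by (rule of_nat_mono)
      finally show ?thesis .
    qed
    have pr: "(p+r)/real n \<le> (1-\<bar>z\<bar>)/2"
      using nb n1 z by (simp add: field_simps)
    define \<rho> where "\<rho> = (real n ^ 2 + p * real n + r) / ((real n + c) * (real n + 1))"
    have rho0: "\<rho> \<ge> 0" unfolding \<rho>_def using p r c by (intro divide_nonneg_pos) auto
    have "real n ^ 2 + p * real n + r \<le> (1 + (p+r)/real n) * ((real n + c) * (real n + 1))"
    proof -
      have "(real n + c) * (real n + 1) \<ge> real n * real n + real n" using c n1
        by (simp add: algebra_simps)
      hence "(1 + (p+r)/real n) * ((real n + c) * (real n + 1)) \<ge> (1 + (p+r)/real n) * (real n * real n + real n)"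
        using p r n1 by (intro mult_left_mono) auto
      moreover have "(1 + (p+r)/real n) * (real n * real n + real n) = real n * real n + real n + (p+r)*(real n + 1)"
        using n1 by (simp add: field_simps)
      moreover have "real n * real n + real n + (p+r)*(real n + 1) \<ge> real n ^ 2 + p * real n + r"
        using p r n1 by (simp add: power2_eq_square algebra_simps)
      ultimately show ?thesis by linarith
    qed
    hence rho1: "\<rho> \<le> 1 + (p+r)/real n"
      unfolding \<rho>_def using c n1 by (subst divide_le_eq) (auto intro: mult_pos_pos)
    have "\<bar>z\<bar> * \<rho> \<le> \<bar>z\<bar> * (1 + (p+r)/real n)" using rho1 by (intro mult_left_mono) auto
    also have "\<dots> \<le> \<bar>z\<bar> + (p+r)/real n"
    proof -
      have "\<bar>z\<bar> * ((p+r)/real n) \<le> 1 * ((p+r)/real n)"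
        using z p r n1 by (intro mult_right_mono) auto
      thus ?thesis by (simp add: algebra_simps)
    qed
    also have "\<dots> \<le> q" using pr by (simp add: q_def)
    finally have zr: "\<bar>z\<bar> * \<rho> \<le> q" .
    have hpos: "hc p r c n > 0" using hc_pos[of p r c n] p r c by auto
    have "norm (hc p r c (Suc n) * z ^ Suc n) = (\<bar>z\<bar> * \<rho>) * (hc p r c n * \<bar>z\<bar>^n)"
    proof -
      have a1: "\<bar>real n ^ 2 + p * real n + r\<bar> = real n ^ 2 + p * real n + r" using p r by simp
      have a2: "\<bar>real n + c\<bar> = real n + c" using c by simp
      show ?thesis using hpos rho0 by (simp add: \<rho>_def abs_mult power_abs a1 a2)
    qed
    also have "\<dots> \<le> q * (hc p r c n * \<bar>z\<bar>^n)"
      using zr hpos by (intro mult_right_mono) auto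
    also have "\<dots> = q * norm (hc p r c n * z ^ n)" using hpos by (simp add: abs_mult power_abs)
    finally show "norm (hc p r c (Suc n) * z ^ Suc n) \<le> q * norm (hc p r c n * z ^ n)" .
  qed
qed


definition FF :: "real \<Rightarrow> real \<Rightarrow> real \<Rightarrow> real \<Rightarrow> real" where
  "FF p r c z = (\<Sum>n. hc p r c n * z^n)"
definition AA :: "real \<Rightarrow> real \<Rightarrow> real \<Rightarrow> real \<Rightarrow> real" where
  "AA p r c z = (\<Sum>n. real n * hc p r c n * z^n)"
definition BB :: "real \<Rightarrow> real \<Rightarrow> real \<Rightarrow> real \<Rightarrow> real" where
  "BB p r c z = (\<Sum>n. real n * (real n * hc p r c n) * z^n)"

locale hpar =
  fixes p r c :: real
  assumes p: "p \<ge> 0" and r: "r > 0" and c: "c \<ge> 1"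
begin

lemma conv_h: "conv1 (hc p r c)" using hc_conv p r c by auto
lemma conv_h1: "conv1 (\<lambda>n. real n * hc p r c n)" by (rule conv1_mult_n[OF conv_h])
lemma conv_h2: "conv1 (\<lambda>n. real n * (real n * hc p r c n))" by (rule conv1_mult_n[OF conv_h1])

lemma FF_deriv:
  assumes "\<bar>z\<bar> < 1"
  shows "\<exists>D. (FF p r c has_real_derivative D) (at z) \<and> z * D = AA p r c z"
proof -
  have "((\<lambda>z. \<Sum>n. hc p r c n * z^n) has_real_derivative (\<Sum>n. diffs (hc p r c) n * z^n)) (at z)"
    by (rule ps_deriv[OF conv_h assms])
  moreover have "z * (\<Sum>n. diffs (hc p r c) n * z^n) = AA p r c z"
    unfolding AA_def by (rule ps_deriv_euler[OF conv_h assms])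
  ultimately show ?thesis unfolding FF_def[abs_def] by blast
qed

lemma AA_deriv:
  assumes "\<bar>z\<bar> < 1"
  shows "\<exists>D. (AA p r c has_real_derivative D) (at z) \<and> z * D = BB p r c z"
proof -
  have "((\<lambda>z. \<Sum>n. real n * hc p r c n * z^n) has_real_derivative (\<Sum>n. diffs (\<lambda>n. real n * hc p r c n) n * z^n)) (at z)"
    by (rule ps_deriv[OF conv_h1 assms])
  moreover have "z * (\<Sum>n. diffs (\<lambda>n. real n * hc p r c n) n * z^n) = BB p r c z"
    unfolding BB_def by (rule ps_deriv_euler[OF conv_h1 assms])
  ultimately show ?thesis unfolding AA_def[abs_def] by blast
qed

lemma FF_cont: "\<bar>z\<bar> < 1 \<Longrightarrow> isCont (FF p r c) z"
  using FF_deriv DERIV_isCont by blast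
lemma AA_cont: "\<bar>z\<bar> < 1 \<Longrightarrow> isCont (AA p r c) z"
  using AA_deriv DERIV_isCont by blast

lemma FF_0: "FF p r c 0 = 1"
  unfolding FF_def by (subst suminf_finite[of "{0}"]) auto
lemma AA_0: "AA p r c 0 = 0"
  unfolding AA_def by simp

lemma hpos: "hc p r c n > 0" using hc_pos p r c by auto

lemma FF_ge1:
  assumes "0 \<le> z" "z < 1" shows "FF p r c z \<ge> 1"
proof -
  have s: "summable (\<lambda>n. hc p r c n * z^n)" using conv_h assms by (auto simp: conv1_def)
  have "sum (\<lambda>n. hc p r c n * z^n) {0} \<le> FF p r c z"
    unfolding FF_def by (rule sum_le_suminf[OF s]) (use hpos assms in \<open>auto intro!: mult_nonneg_nonneg less_imp_le[OF hpos]\<close>)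
  thus ?thesis by simp
qed

lemma AA_pos:
  assumes "0 < z" "z < 1" shows "AA p r c z > 0"
proof -
  have s: "summable (\<lambda>n. real n * hc p r c n * z^n)" using conv_h1 assms by (auto simp: conv1_def)
  have "sum (\<lambda>n. real n * hc p r c n * z^n) {1} \<le> AA p r c z"
    unfolding AA_def by (rule sum_le_suminf[OF s]) (use hpos assms in \<open>auto intro!: mult_nonneg_nonneg less_imp_le[OF hpos]\<close>)
  moreover have "real 1 * hc p r c 1 * z^1 > 0" using hpos[of 1] assms by (simp del: hc.simps)
  ultimately show ?thesis by simp
qed

lemma hc_rec: "real (Suc n) * (real (Suc n) + (c - 1)) * hc p r c (Suc n) = (real n ^ 2 + p * real n + r) * hc p r c n"
proof -
  have "(real n + c) * (real n + 1) > 0" using c by (intro mult_pos_pos) auto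
  thus ?thesis by (simp add: field_simps)
qed

lemma identity:
  assumes z: "\<bar>z\<bar> < 1"
  shows "BB p r c z + (c - 1) * AA p r c z = z * (BB p r c z + p * AA p r c z + r * FF p r c z)"
proof -
  have s0: "summable (\<lambda>n. hc p r c n * z^n)" using conv_h z by (auto simp: conv1_def)
  have s1: "summable (\<lambda>n. real n * hc p r c n * z^n)" using conv_h1 z by (auto simp: conv1_def)
  have s2: "summable (\<lambda>n. real n * (real n * hc p r c n) * z^n)" using conv_h2 z by (auto simp: conv1_def)
  define f where "f n = real n * (real n * hc p r c n) * z^n + (c - 1) * (real n * hc p r c n * z^n)" for n
  have L: "f sums (BB p r c z + (c - 1) * AA p r c z)"
    unfolding f_def BB_def AA_def
    by (intro sums_add sums_mult summable_sums s1 s2)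
  have R: "(\<lambda>n. z * (real n * (real n * hc p r c n) * z^n + p * (real n * hc p r c n * z^n) + r * (hc p r c n * z^n)))
      sums (z * (BB p r c z + p * AA p r c z + r * FF p r c z))"
    unfolding FF_def BB_def AA_def
    by (intro sums_add sums_mult summable_sums s0 s1 s2)
  have eq: "f (Suc n) = z * (real n * (real n * hc p r c n) * z^n + p * (real n * hc p r c n * z^n) + r * (hc p r c n * z^n))" for n
  proof -
    have "f (Suc n) = (real (Suc n) * (real (Suc n) + (c - 1)) * hc p r c (Suc n)) * z^(Suc n)"
      unfolding f_def by (simp del: hc.simps add: algebra_simps)
    also have "\<dots> = (real n ^ 2 + p * real n + r) * hc p r c n * z^(Suc n)" by (simp only: hc_rec)
    finally show ?thesis by (simp add: algebra_simps power2_eq_square)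
  qed
  have "(\<lambda>n. f (Suc n)) sums (BB p r c z + (c - 1) * AA p r c z)"
    using L by (subst sums_Suc_iff) (simp add: f_def)
  hence "(\<lambda>n. z * (real n * (real n * hc p r c n) * z^n + p * (real n * hc p r c n * z^n) + r * (hc p r c n * z^n)))
      sums (BB p r c z + (c - 1) * AA p r c z)" by (simp only: eq)
  thus ?thesis using R sums_unique2 by blast
qed

end

lemma ric_alg:
  fixes F A B z x s1 s2 p r c1 c2 c3 :: real
  assumes F: "F \<noteq> 0" and z: "z \<noteq> 0" and x: "x = 2*z - 1"
    and c1: "c1 = s1^2 - 1" and c2: "c2 = s2^2 - 1" and p: "p = 1 + s1 + s2"
    and c3: "c3 = 2*r - (s1+s2)*(s1+s2+2)/2"
  shows "(1-x^2)*(-(2+s1+s2) + 4*((-1/2)*(A/F) + (1-z)*(((B/z)/2)*F - A*((A/z)/2))/F^2))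
          + 2*x*((s1-s2) - (2+s1+s2)*x + 4*(1-z)*A/F)
          + ((s1-s2) - (2+s1+s2)*x + 4*(1-z)*A/F)^2/2 - Pc c1 c2 c3 x
        = 8*(1-z)/F * ((1-z)*B + s1*A - p*z*A - r*z*F)"
  using F z unfolding x c1 c2 c3 p Pc_def
  by (simp add: field_simps power2_eq_square)

definition Lf :: "real \<Rightarrow> real \<Rightarrow> real \<Rightarrow> real" where
  "Lf c1 c2 x = (sqrt (1+c1) - sqrt (1+c2)) - (2 + sqrt (1+c1) + sqrt (1+c2)) * x"
definition pP :: "real \<Rightarrow> real \<Rightarrow> real" where "pP c1 c2 = 1 + sqrt (1+c1) + sqrt (1+c2)"
definition rR :: "real \<Rightarrow> real \<Rightarrow> real \<Rightarrow> real" where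
  "rR c1 c2 c3 = c3/2 + (sqrt (1+c1) + sqrt (1+c2)) * (sqrt (1+c1) + sqrt (1+c2) + 2)/4"
definition cC :: "real \<Rightarrow> real" where "cC c1 = 1 + sqrt (1+c1)"
definition Vplus :: "real \<Rightarrow> real \<Rightarrow> real \<Rightarrow> real \<Rightarrow> real" where
  "Vplus c1 c2 c3 x = Lf c1 c2 x + 4 * (1 - (1+x)/2) * AA (pP c1 c2) (rR c1 c2 c3) (cC c1) ((1+x)/2)
      / FF (pP c1 c2) (rR c1 c2 c3) (cC c1) ((1+x)/2)"

lemma rR_pos: "c3 > c3bar c1 c2 \<Longrightarrow> rR c1 c2 c3 > 0"
  unfolding rR_def c3bar_def by (simp add: field_simps)

lemma hpar_inst:
  assumes "c1 \<ge> -1" "c2 \<ge> -1" "c3 > c3bar c1 c2"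
  shows "hpar (pP c1 c2) (rR c1 c2 c3) (cC c1)"
  using rR_pos[OF assms(3)] assms by unfold_locales (auto simp: pP_def cC_def)

lemma Vplus_solves:
  assumes c1: "c1 \<ge> -1" and c2: "c2 \<ge> -1" and c3: "c3 > c3bar c1 c2"
  shows "solves_on c1 c2 c3 (Vplus c1 c2 c3) {-1<..<1}"
  unfolding solves_on_def
proof
  fix x :: real assume x: "x \<in> {-1<..<1}"
  interpret hpar "pP c1 c2" "rR c1 c2 c3" "cC c1" by (rule hpar_inst[OF assms])
  define p r c where "p = pP c1 c2" and "r = rR c1 c2 c3" and "c = cC c1"
  define s1 s2 where "s1 = sqrt (1+c1)" and "s2 = sqrt (1+c2)"
  define z where "z = (1+x)/2"
  have z01: "0 < z" "z < 1" using x by (auto simp: z_def)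
  hence za: "\<bar>z\<bar> < 1" by simp
  define F A B where "F = FF p r c z" and "A = AA p r c z" and "B = BB p r c z"
  obtain DF where DF: "(FF p r c has_real_derivative DF) (at z)" "z * DF = A"
    using FF_deriv[OF za] unfolding p_def r_def c_def A_def by blast
  obtain DA where DA: "(AA p r c has_real_derivative DA) (at z)" "z * DA = B"
    using AA_deriv[OF za] unfolding p_def r_def c_def B_def by blast
  have Fpos: "F \<ge> 1" using FF_ge1 z01 unfolding F_def p_def r_def c_def by auto
  have idt: "B + s1 * A = z * (B + p * A + r * F)"
    using identity[OF za] unfolding A_def B_def F_def p_def r_def c_def cC_def s1_def by simp
  have zd: "((\<lambda>x. (1+x)/2) has_real_derivative 1/2) (at x)"
    by (auto intro!: derivative_eq_intros)
  have hF: "((\<lambda>x. FF p r c ((1+x)/2)) has_real_derivative DF * (1/2)) (at x)"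
    using DERIV_chain2[OF DF(1)[unfolded z_def] zd] .
  have hA: "((\<lambda>x. AA p r c ((1+x)/2)) has_real_derivative DA * (1/2)) (at x)"
    using DERIV_chain2[OF DA(1)[unfolded z_def] zd] .
  define D where "D = -(2+s1+s2) + 4*((-1/2)*(A/F) + (1-z)*(((B/z)/2)*F - A*((A/z)/2))/F^2)"
  have der: "(Vplus c1 c2 c3 has_real_derivative D) (at x)"
  proof -
    have "((\<lambda>x. (s1 - s2) - (2 + s1 + s2) * x + 4 * (1 - (1+x)/2) * AA p r c ((1+x)/2) / FF p r c ((1+x)/2))
        has_real_derivative (-(2+s1+s2) + ((4 * (- (1/2)) * A + 4 * (1 - z) * (DA * (1/2))) * F - 4 * (1 - z) * A * (DF * (1/2))) / (F * F))) (at x)"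
      by (rule derivative_eq_intros hF hA refl | (use Fpos in \<open>simp add: F_def A_def z_def\<close>))+
    moreover have "-(2+s1+s2) + ((4 * (- (1/2)) * A + 4 * (1 - z) * (DA * (1/2))) * F - 4 * (1 - z) * A * (DF * (1/2))) / (F * F) = D"
    proof -
      have e1: "DF = A / z" "DA = B / z" using DF(2) DA(2) z01 by (auto simp: field_simps)
      show ?thesis unfolding D_def e1 using Fpos z01 by (simp add: field_simps power2_eq_square)
    qed
    ultimately show ?thesis unfolding Vplus_def Lf_def s1_def s2_def p_def r_def c_def by (simp add: fun_eq_iff)
  qed
  have Vx: "Vplus c1 c2 c3 x = (s1-s2) - (2+s1+s2)*x + 4*(1-z)*A/F"
    unfolding Vplus_def Lf_def s1_def s2_def A_def F_def z_def p_def r_def c_def by simp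
  have eq: "(1 - x^2) * D + 2 * x * Vplus c1 c2 c3 x + (Vplus c1 c2 c3 x)^2 / 2 - Pc c1 c2 c3 x
      = 8*(1-z)/F * ((1-z)*B + s1*A - p*z*A - r*z*F)"
    unfolding Vx D_def
  proof (rule ric_alg)
    show "F \<noteq> 0" "z \<noteq> 0" using Fpos z01 by auto
    show "x = 2*z - 1" by (simp add: z_def field_simps)
    show "c1 = s1^2 - 1" "c2 = s2^2 - 1" using c1 c2 by (auto simp: s1_def s2_def)
    show "p = 1 + s1 + s2" by (simp add: p_def pP_def s1_def s2_def)
    show "c3 = 2*r - (s1+s2)*(s1+s2+2)/2" by (simp add: r_def rR_def s1_def s2_def)
  qed
  have "(1-z)*B + s1*A - p*z*A - r*z*F = 0" using idt by (simp add: algebra_simps)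
  hence "(1 - x^2) * D + 2 * x * Vplus c1 c2 c3 x + (Vplus c1 c2 c3 x)^2 / 2 = Pc c1 c2 c3 x"
    using eq by simp
  with der show "\<exists>D. (Vplus c1 c2 c3 has_real_derivative D) (at x) \<and>
        (1 - x\<^sup>2) * D + 2 * x * Vplus c1 c2 c3 x + (Vplus c1 c2 c3 x)\<^sup>2 / 2 = Pc c1 c2 c3 x" by blast
qed


lemma cross:
  fixes f f' :: "real \<Rightarrow> real"
  assumes der: "\<And>x. a < x \<Longrightarrow> x < b \<Longrightarrow> (f has_real_derivative f' x) (at x)"
    and pos: "\<And>x. a < x \<Longrightarrow> x < b \<Longrightarrow> f x = 0 \<Longrightarrow> f' x > 0"
    and xy: "a < x" "x < y" "y < b" and fx: "f x \<ge> 0"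
  shows "f y > 0"
proof (rule ccontr)
  assume "\<not> f y > 0" hence fy: "f y \<le> 0" by simp
  have cont: "continuous_on {u..v} f" if "a < u" "v < b" for u v
  proof (rule continuous_at_imp_continuous_on, intro ballI)
    fix t assume "t \<in> {u..v}"
    thus "isCont f t" using der[of t] that DERIV_isCont by auto
  qed
  obtain x' where x': "x \<le> x'" "x' < y" "f x' > 0"
  proof (cases "f x > 0")
    case True thus ?thesis using that xy by auto
  next
    case False
    hence "f x = 0" using fx by simp
    hence "f' x > 0" using pos xy by auto
    then obtain d where d: "d > 0" "\<And>h. h > 0 \<Longrightarrow> h < d \<Longrightarrow> f x < f (x + h)"
      using DERIV_pos_inc_right[OF der[of x]] xy by force
    define h where "h = min (d/2) ((y-x)/2)"
    have "h > 0" "h < d" using d xy by (auto simp: h_def)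
    hence "f (x+h) > 0" using d(2) \<open>f x = 0\<close> by force
    moreover have "h \<le> (y-x)/2" unfolding h_def by (rule min.cobounded2)
    moreover have "x \<le> x + h" "x + h < y" using \<open>h>0\<close> xy calculation by auto
    ultimately show ?thesis using that[of "x+h"] by blast
  qed
  define Z where "Z = {x'..y} \<inter> f -` {..0}"
  have cZ: "closed Z" unfolding Z_def
    by (rule continuous_closed_preimage) (use cont xy x' in auto)
  have yZ: "y \<in> Z" using fy x' by (auto simp: Z_def)
  have bZ: "bdd_below Z" unfolding Z_def by (rule bdd_belowI[of _ x']) auto
  define z where "z = Inf Z"
  have zZ: "z \<in> Z" unfolding z_def by (rule closed_contains_Inf) (use yZ bZ cZ in auto)
  have zle: "x' \<le> z" "z \<le> y" "f z \<le> 0" using zZ by (auto simp: Z_def)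
  have below: "f t > 0" if "x' \<le> t" "t < z" for t
  proof (rule ccontr)
    assume "\<not> f t > 0"
    hence "t \<in> Z" using that zle by (auto simp: Z_def)
    hence "z \<le> t" unfolding z_def using bZ by (rule cInf_lower)
    thus False using that by simp
  qed
  have zx': "x' < z" using zle x' by (cases "x' = z") auto
  have fz0: "f z = 0"
  proof (rule ccontr)
    assume "f z \<noteq> 0" hence "f z < 0" using zle by simp
    obtain t where t: "x' \<le> t" "t \<le> z" "f t = 0"
      using IVT2'[of f z 0 x'] zle x' cont[of x' z] xy by force
    have "t \<noteq> z" using t \<open>f z < 0\<close> by auto
    hence "f t > 0" using below[of t] t by force
    thus False using t by simp
  qed
  hence "f' z > 0" using pos xy zle x' by auto
  then obtain d where d: "d > 0" "\<And>h. h > 0 \<Longrightarrow> h < d \<Longrightarrow> f (z - h) < f z"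
    using DERIV_pos_inc_left[OF der[of z]] xy zle x' by force
  define h where "h = min (d/2) ((z-x')/2)"
  have "h > 0" "h < d" using d zx' by (auto simp: h_def)
  hence "f (z-h) < 0" using d(2) fz0 by force
  moreover have "h \<le> (z-x')/2" unfolding h_def by (rule min.cobounded2)
  moreover have "f (z-h) > 0" using below[of "z-h"] \<open>h>0\<close> zx' calculation by auto
  ultimately show False by simp
qed

lemma uniq:
  fixes U1 U2 :: "real \<Rightarrow> real"
  assumes ab: "-1 \<le> a" "a < b" "b \<le> 1"
    and s1: "solves_on c1 c2 c3 U1 {a<..<b}" and s2: "solves_on c1 c2 c3 U2 {a<..<b}"
    and lim: "((\<lambda>x. U1 x - U2 x) \<longlongrightarrow> 0) (at_right a)"
    and bnd: "\<And>x. a < x \<Longrightarrow> x < b \<Longrightarrow> 2*x + (U1 x + U2 x)/2 \<ge> -C*(1-x^2)"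
  shows "\<forall>x\<in>{a<..<b}. U1 x = U2 x"
proof -
  define C' where "C' = max C 0"
  have bnd': "2*x + (U1 x + U2 x)/2 \<ge> -C'*(1-x^2)" if "a < x" "x < b" for x
  proof -
    have "1 - x^2 \<ge> 0" using that ab by (simp add: abs_square_le_1)
    hence "-C'*(1-x^2) \<le> -C*(1-x^2)" unfolding C'_def by (intro mult_right_mono) auto
    thus ?thesis using bnd[OF that] by linarith
  qed
  define g where "g x = (U1 x - U2 x)^2 * exp (-2*C'*x)" for x
  have gder: "\<exists>y. (g has_real_derivative y) (at x) \<and> y \<le> 0" if x: "a < x" "x < b" for x
  proof -
    obtain D1 where D1: "(U1 has_real_derivative D1) (at x)" "(1 - x^2) * D1 + 2 * x * U1 x + (U1 x)^2 / 2 = Pc c1 c2 c3 x"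
      using s1 x unfolding solves_on_def by (meson greaterThanLessThan_iff)
    obtain D2 where D2: "(U2 has_real_derivative D2) (at x)" "(1 - x^2) * D2 + 2 * x * U2 x + (U2 x)^2 / 2 = Pc c1 c2 c3 x"
      using s2 x unfolding solves_on_def by (meson greaterThanLessThan_iff)
    define w where "w = U1 x - U2 x"
    define e where "e = exp (-2*C'*x)"
    have hx: "1 - x^2 > 0" using x ab by (simp add: abs_square_less_1)
    have dd: "(1 - x^2) * (D1 - D2) = - w * (2*x + (U1 x + U2 x)/2)"
    proof -
      have e1: "(1 - x^2) * D1 = Pc c1 c2 c3 x - 2 * x * U1 x - (U1 x)^2 / 2" using D1(2) by linarith
      have e2: "(1 - x^2) * D2 = Pc c1 c2 c3 x - 2 * x * U2 x - (U2 x)^2 / 2" using D2(2) by linarith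
      show ?thesis unfolding right_diff_distrib e1 e2 w_def by (simp add: algebra_simps power2_eq_square add_divide_distrib diff_divide_distrib)
    qed
    have "(g has_real_derivative (2 * w * (D1 - D2) * e - 2*C' * w^2 * e)) (at x)"
      unfolding g_def
      by (rule derivative_eq_intros D1(1) D2(1) refl | simp add: w_def e_def)+
    moreover have "2 * w * (D1 - D2) * e - 2*C' * w^2 * e \<le> 0"
    proof -
      have "(1 - x^2) * (2 * w * (D1 - D2) * e - 2*C' * w^2 * e) = 2*w*e*((1 - x^2) * (D1 - D2)) - 2*C'*w^2*e*(1-x^2)"
        by (simp add: algebra_simps)
      also have "\<dots> = 2*w*e*(- w * (2*x + (U1 x + U2 x)/2)) - 2*C'*w^2*e*(1-x^2)" by (simp only: dd)
      also have "\<dots> = -2 * e * w^2 * (2*x + (U1 x + U2 x)/2 + C'*(1-x^2))"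
        by (simp add: algebra_simps power2_eq_square add_divide_distrib diff_divide_distrib)
      also have "\<dots> \<le> 0" using bnd'[OF x] by (intro mult_nonpos_nonneg) (auto simp: e_def)
      finally show ?thesis using hx by (simp add: mult_le_0_iff)
    qed
    ultimately show ?thesis by blast
  qed
  have gcont: "continuous_on {u..v} g" if "a < u" "v < b" for u v
  proof (rule continuous_at_imp_continuous_on, intro ballI)
    fix t assume "t \<in> {u..v}"
    thus "isCont g t" using gder[of t] that DERIV_isCont by auto
  qed
  have anti: "g x \<le> g y" if "a < y" "y \<le> x" "x < b" for x y
    by (rule DERIV_nonpos_imp_decreasing_open) (use that gder gcont in auto)
  have sq: "((\<lambda>x. (U1 x - U2 x)^2) \<longlongrightarrow> 0) (at_right a)"
    using tendsto_power[OF lim, of 2] by simp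
  have glim: "(g \<longlongrightarrow> 0 * exp (-2*C'*a)) (at_right a)"
    unfolding g_def by (intro tendsto_intros sq)
  show ?thesis
  proof
    fix x assume x: "x \<in> {a<..<b}"
    have "g x \<le> 0"
    proof (rule tendsto_lowerbound[OF glim[simplified]])
      show "\<forall>\<^sub>F y in at_right a. g x \<le> g y"
        unfolding eventually_at_right_field using x by (intro exI[of _ x]) (auto intro: anti)
    qed simp
    moreover have "g x \<ge> 0" by (simp add: g_def)
    ultimately have "g x = 0" by simp
    thus "U1 x = U2 x" by (simp add: g_def)
  qed
qed

lemma series_bound:
  fixes a :: "nat \<Rightarrow> real"
  assumes d: "\<delta> > 0" and ser: "\<forall>x\<in>{-1<..<-1+\<delta>}. (\<lambda>n. a n * (1 + x)^n) sums (U x)"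
  shows "\<exists>\<epsilon>>0. \<exists>C. \<forall>x\<in>{-1<..<-1+\<epsilon>}. \<bar>U x - a 0\<bar> \<le> C * (1 + x)"
proof -
  define t0 where "t0 = \<delta>/2"
  have t0: "t0 > 0" "t0 < \<delta>" using d by (auto simp: t0_def)
  have "-1 + t0 \<in> {-1<..<-1+\<delta>}" using t0 by auto
  from ser[rule_format, OF this] have "summable (\<lambda>n. a n * t0^n)" by (simp add: sums_iff)
  hence "(\<lambda>n. a n * t0^n) \<longlonglongrightarrow> 0" by (rule summable_LIMSEQ_zero)
  hence "Bseq (\<lambda>n. a n * t0^n)" by (rule convergent_imp_Bseq[OF convergentI])
  then obtain B where B: "B > 0" "\<And>n. \<bar>a n * t0^n\<bar> \<le> B" by (auto simp: Bseq_def)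
  show ?thesis
  proof (rule exI[of _ "t0/2"], intro conjI exI[of _ "2*B/t0"] ballI)
    show "t0/2 > 0" using t0 by simp
    fix x assume x: "x \<in> {-1<..<-1 + t0/2}"
    define t where "t = 1 + x"
    define q where "q = t / t0"
    have tq: "0 < t" "t < t0/2" "0 < q" "q < 1/2" using x t0 by (auto simp: t_def q_def field_simps)
    have "(\<lambda>n. a n * t^n) sums (U x)" using ser x t0 unfolding t_def by auto
    hence s: "(\<lambda>n. a (Suc n) * t^(Suc n)) sums (U x - a 0)"
      by (subst sums_Suc_iff) simp
    have tb: "norm (a (Suc n) * t^(Suc n)) \<le> B * q * q^n" for n
    proof -
      have "t^(Suc n) = t0^(Suc n) * q^(Suc n)" using t0 by (simp add: q_def power_divide)
      hence "\<bar>a (Suc n) * t^(Suc n)\<bar> = \<bar>a (Suc n) * t0^(Suc n)\<bar> * q^(Suc n)"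
        using tq by (simp add: abs_mult)
      also have "\<dots> \<le> B * q^(Suc n)" using B(2)[of "Suc n"] tq by (intro mult_right_mono) auto
      finally show ?thesis by simp
    qed
    have gs: "(\<lambda>n. B * q * q^n) sums (B * q * (1 / (1 - q)))"
      by (intro sums_mult geometric_sums) (use tq in auto)
    have "\<bar>U x - a 0\<bar> \<le> B * q * (1 / (1 - q))"
      using norm_suminf_le[of "\<lambda>n. a (Suc n) * t^(Suc n)" "\<lambda>n. B * q * q^n", OF tb] gs s
      by (simp add: sums_iff)
    also have "\<dots> \<le> B * q * 2" using tq B by (intro mult_left_mono) (auto simp: field_simps)
    also have "\<dots> = 2*B/t0 * (1 + x)" by (simp add: q_def t_def)
    finally show "\<bar>U x - a 0\<bar> \<le> 2*B/t0 * (1 + x)" by simp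
  qed
qed


definition GG :: "real \<Rightarrow> real \<Rightarrow> real \<Rightarrow> real \<Rightarrow> real \<Rightarrow> real" where
  "GG c1 c2 c3 x u = Pc c1 c2 c3 x - 2*x*u - u^2/2"

lemma solves_deriv:
  assumes "solves_on c1 c2 c3 U S" "x \<in> S" "\<bar>x\<bar> < 1"
  shows "(U has_real_derivative GG c1 c2 c3 x (U x) / (1 - x^2)) (at x)"
proof -
  obtain D where D: "(U has_real_derivative D) (at x)" "(1 - x^2) * D + 2 * x * U x + (U x)^2 / 2 = Pc c1 c2 c3 x"
    using assms unfolding solves_on_def by blast
  have "x^2 < 1" using assms(3) by (simp add: abs_square_less_1)
  hence "1 - x^2 \<noteq> 0" by simp
  hence "D = GG c1 c2 c3 x (U x) / (1 - x^2)" using D(2) by (simp add: GG_def field_simps)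
  thus ?thesis using D(1) by simp
qed

lemma GG_lim: "((\<lambda>x. GG c1 c2 c3 x v) \<longlongrightarrow> GG c1 c2 c3 1 v) (at_left 1)"
  unfolding GG_def Pc_def by (intro tendsto_intros)

lemma dichotomy:
  assumes x0: "-1 \<le> x0" "x0 < 1" and sol: "solves_on c1 c2 c3 U {x0<..<1}"
    and G: "GG c1 c2 c3 1 v \<noteq> 0"
  shows "eventually (\<lambda>x. v < U x) (at_left 1) \<or> eventually (\<lambda>x. U x < v) (at_left 1)"
proof -
  have der: "(U has_real_derivative GG c1 c2 c3 x (U x) / (1 - x^2)) (at x)" if "x0 < x" "x < 1" for x
    using solves_deriv[OF sol] that x0 by auto
  have hx: "1 - x^2 > 0" if "x0 < x" "x < 1" for x using that x0 by (simp add: abs_square_less_1)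
  show ?thesis
  proof (cases "GG c1 c2 c3 1 v > 0")
    case True
    have "eventually (\<lambda>x. GG c1 c2 c3 x v > 0) (at_left 1)"
      using order_tendstoD(1)[OF GG_lim True] .
    then obtain b where b: "b < 1" "\<And>y. b < y \<Longrightarrow> y < 1 \<Longrightarrow> GG c1 c2 c3 y v > 0"
      unfolding eventually_at_left_field by blast
    define b' where "b' = max b x0"
    have cr: "U y - v > 0" if "b' < x" "x < y" "y < 1" "U x - v \<ge> 0" for x y
    proof (rule cross[where f="\<lambda>x. U x - v" and f'="\<lambda>x. GG c1 c2 c3 x (U x) / (1 - x^2)" and a=b' and b=1])
      fix t assume t: "b' < t" "t < 1"
      show "((\<lambda>x. U x - v) has_real_derivative GG c1 c2 c3 t (U t) / (1 - t^2)) (at t)"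
        using der[of t] t by (auto simp: b'_def intro!: derivative_eq_intros)
      assume "U t - v = 0"
      thus "GG c1 c2 c3 t (U t) / (1 - t^2) > 0" using b(2)[of t] hx[of t] t by (auto simp: b'_def)
    qed (use that in auto)
    show ?thesis
    proof (cases "\<exists>y. b' < y \<and> y < 1 \<and> U y \<ge> v")
      case True
      then obtain y where y: "b' < y" "y < 1" "U y \<ge> v" by auto
      have "eventually (\<lambda>x. v < U x) (at_left 1)"
        unfolding eventually_at_left_field using cr y by (intro exI[of _ y]) force
      thus ?thesis by simp
    next
      case False
      have "eventually (\<lambda>x. U x < v) (at_left 1)"
        unfolding eventually_at_left_field using False b x0 by (intro exI[of _ b']) (auto simp: b'_def)
      thus ?thesis by simp
    qed
  next
    case False
    hence neg: "GG c1 c2 c3 1 v < 0" using G by simp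
    have "eventually (\<lambda>x. GG c1 c2 c3 x v < 0) (at_left 1)"
      using order_tendstoD(2)[OF GG_lim neg] .
    then obtain b where b: "b < 1" "\<And>y. b < y \<Longrightarrow> y < 1 \<Longrightarrow> GG c1 c2 c3 y v < 0"
      unfolding eventually_at_left_field by blast
    define b' where "b' = max b x0"
    have cr: "v - U y > 0" if "b' < x" "x < y" "y < 1" "v - U x \<ge> 0" for x y
    proof (rule cross[where f="\<lambda>x. v - U x" and f'="\<lambda>x. - (GG c1 c2 c3 x (U x) / (1 - x^2))" and a=b' and b=1])
      fix t assume t: "b' < t" "t < 1"
      show "((\<lambda>x. v - U x) has_real_derivative - (GG c1 c2 c3 t (U t) / (1 - t^2))) (at t)"
        using der[of t] t by (auto simp: b'_def intro!: derivative_eq_intros)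
      assume "v - U t = 0"
      thus "- (GG c1 c2 c3 t (U t) / (1 - t^2)) > 0" using b(2)[of t] hx[of t] t
        by (auto simp: b'_def divide_neg_pos)
    qed (use that in auto)
    show ?thesis
    proof (cases "\<exists>y. b' < y \<and> y < 1 \<and> U y \<le> v")
      case True
      then obtain y where y: "b' < y" "y < 1" "U y \<le> v" by auto
      have "eventually (\<lambda>x. U x < v) (at_left 1)"
        unfolding eventually_at_left_field using cr y by (intro exI[of _ y]) force
      thus ?thesis by simp
    next
      case False
      have "eventually (\<lambda>x. v < U x) (at_left 1)"
        unfolding eventually_at_left_field using False b x0 by (intro exI[of _ b']) (auto simp: b'_def)
      thus ?thesis by simp
    qed
  qed
qed

lemma GG1_roots:
  assumes c2: "c2 \<ge> -1" and G: "GG c1 c2 c3 1 v = 0"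
  shows "v = tau1' c2 \<or> v = tau2' c2"
proof -
  have e: "(v + 2)^2 = 4 + 4 * c2"
    using G by (simp add: GG_def Pc_def algebra_simps power2_eq_square)
  have s: "(2 * sqrt (1 + c2))^2 = 4 + 4 * c2" using c2 by (simp add: power_mult_distrib)
  have "(v + 2)^2 = (2 * sqrt (1 + c2))^2" using e s by simp
  hence "v + 2 = 2 * sqrt (1 + c2) \<or> v + 2 = - (2 * sqrt (1 + c2))" using power2_eq_iff by blast
  thus ?thesis by (auto simp: tau1'_def tau2'_def)
qed

lemma three_roots:
  assumes "GG c1 c2 c3 1 v1 = 0" "GG c1 c2 c3 1 v2 = 0" "GG c1 c2 c3 1 v3 = 0"
    and "v1 \<noteq> v2" "v1 \<noteq> v3" "v2 \<noteq> v3"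
  shows False
proof -
  have e: "(v + 2)^2 = 4 + 4*c2" if "GG c1 c2 c3 1 v = 0" for v
    using that by (simp add: GG_def Pc_def algebra_simps power2_eq_square)
  have "(v1+2)^2 = (v2+2)^2" "(v1+2)^2 = (v3+2)^2" using e assms by auto
  hence "v1 + 2 = -(v2+2)" "v1 + 2 = -(v3 + 2)" using assms by (auto simp: power2_eq_iff)
  thus False using assms by simp
qed

lemma ln_to_bot: "eventually (\<lambda>x. ln (1 - x) < -K) (at_left (1::real))"
  unfolding eventually_at_left_field
proof (intro exI[of _ "1 - exp (-K)"] conjI allI impI)
  show "1 - exp (-K) < 1" by simp
  fix y :: real assume y: "1 - exp (-K) < y" "y < 1"
  have "ln (1 - y) < ln (exp (-K))" using y by (subst ln_less_cancel_iff) auto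
  thus "ln (1 - y) < -K" by simp
qed

lemma limit_at_1:
  assumes c2: "c2 \<ge> -1" and x0: "-1 \<le> x0" "x0 < 1" and sol: "solves_on c1 c2 c3 U {x0<..<1}"
    and bd: "\<And>x. x0 < x \<Longrightarrow> x < 1 \<Longrightarrow> m \<le> U x \<and> U x \<le> M"
  shows "\<exists>l. (U \<longlongrightarrow> l) (at_left 1) \<and> (l = tau1' c2 \<or> l = tau2' c2)"
proof -
  have evx0: "eventually (\<lambda>x. x0 < x \<and> x < 1) (at_left 1)"
    unfolding eventually_at_left_field using x0 by auto
  define A where "A = {v. eventually (\<lambda>x. v < U x) (at_left 1)}"
  have mA: "m - 1 \<in> A" unfolding A_def mem_Collect_eq
    by (rule eventually_mono[OF evx0]) (use bd in force)
  have AM: "v < M" if "v \<in> A" for v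
  proof -
    have "eventually (\<lambda>x. v < U x \<and> x0 < x \<and> x < 1) (at_left 1)"
      using that evx0 unfolding A_def by (auto intro: eventually_conj)
    then obtain x where "v < U x" "x0 < x" "x < 1" using eventually_happens'[of "at_left (1::real)"] by force
    thus ?thesis using bd by force
  qed
  have Ane: "A \<noteq> {}" using mA by auto
  have Abd: "bdd_above A" using AM by (auto intro!: bdd_aboveI[of _ M] less_imp_le)
  define l where "l = Sup A"
  have lim: "(U \<longlongrightarrow> l) (at_left 1)"
  proof (rule order_tendstoI)
    fix a assume "a < l"
    then obtain v where "v \<in> A" "a < v" using less_cSup_iff[OF Ane Abd] unfolding l_def by auto
    thus "eventually (\<lambda>x. a < U x) (at_left 1)" unfolding A_def by (auto elim: eventually_mono)
  next
    fix a assume al: "l < a"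
    define v1 v2 v3 where "v1 = l + (a-l)/2" and "v2 = l + (a-l)/3" and "v3 = l + (a-l)/4"
    have vs: "l < v1" "v1 < a" "l < v2" "v2 < a" "l < v3" "v3 < a" "v1 \<noteq> v2" "v1 \<noteq> v3" "v2 \<noteq> v3"
      using al by (auto simp: v1_def v2_def v3_def field_simps)
    obtain v where v: "l < v" "v < a" "GG c1 c2 c3 1 v \<noteq> 0"
      using three_roots[of c1 c2 c3 v1 v2 v3] vs by blast
    have "v \<notin> A"
    proof
      assume "v \<in> A" hence "v \<le> l" unfolding l_def using Abd by (rule cSup_upper)
      thus False using v by simp
    qed
    hence "\<not> eventually (\<lambda>x. v < U x) (at_left 1)" by (simp add: A_def)
    hence "eventually (\<lambda>x. U x < v) (at_left 1)" using dichotomy[OF x0 sol v(3)] by blast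
    thus "eventually (\<lambda>x. U x < a) (at_left 1)" using v by (auto elim: eventually_mono)
  qed
  have Glim: "((\<lambda>x. GG c1 c2 c3 x (U x)) \<longlongrightarrow> GG c1 c2 c3 1 l) (at_left 1)"
    unfolding GG_def Pc_def by (intro tendsto_intros lim) auto
  have der: "(U has_real_derivative GG c1 c2 c3 x (U x) / (1 - x^2)) (at x)" if "x0 < x" "x < 1" for x
    using solves_deriv[OF sol] that x0 by auto
  have hx: "1 - x^2 > 0" "1 - x^2 \<le> 2 * (1 - x)" if "x0 < x" "x < 1" for x
  proof -
    have "\<bar>x\<bar> < 1" using that x0 by auto
    hence "x^2 < 1" by (simp add: abs_square_less_1)
    moreover have "0 \<le> (1 - x)^2" by simp
    ultimately show "1 - x^2 > 0" "1 - x^2 \<le> 2 * (1 - x)" by (auto simp: power2_eq_square algebra_simps)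
  qed
  have Ucont: "continuous_on {u..w} U" if "x0 < u" "w < 1" for u w
  proof (rule continuous_at_imp_continuous_on, intro ballI)
    fix t assume "t \<in> {u..w}"
    thus "isCont U t" using der[of t] that DERIV_isCont by auto
  qed
  have "GG c1 c2 c3 1 l = 0"
  proof (rule ccontr)
    assume nz: "GG c1 c2 c3 1 l \<noteq> 0"
    show False
    proof (cases "GG c1 c2 c3 1 l > 0")
      case True
      define g0 where "g0 = GG c1 c2 c3 1 l / 2"
      have g0: "g0 > 0" using True by (simp add: g0_def)
      have "eventually (\<lambda>x. GG c1 c2 c3 x (U x) > g0 \<and> x0 < x \<and> x < 1) (at_left 1)"
        using order_tendstoD(1)[OF Glim, of g0] True evx0 by (auto simp: g0_def intro: eventually_conj)
      then obtain b where b: "b < 1" "\<And>y. b < y \<Longrightarrow> y < 1 \<Longrightarrow> GG c1 c2 c3 y (U y) > g0 \<and> x0 < y"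
        unfolding eventually_at_left_field by blast
      define x3 where "x3 = (b + 1)/2"
      have x3: "b < x3" "x3 < 1" using b by (auto simp: x3_def)
      define H where "H x = U x + (g0/2) * ln (1 - x)" for x
      have Hmono: "H x3 \<le> H x" if "x3 \<le> x" "x < 1" for x
      proof (rule DERIV_nonneg_imp_increasing_open[OF that(1)])
        fix t assume t: "x3 < t" "t < x"
        have t1: "x0 < t" "t < 1" "b < t" using b(2)[of t] t x3 that by auto
        have dl: "((\<lambda>x. ln (1 - x)) has_real_derivative (-1 / (1 - t))) (at t)"
          using t1 by (auto intro!: derivative_eq_intros simp: field_simps)
        have "(H has_real_derivative GG c1 c2 c3 t (U t) / (1 - t^2) + (g0/2) * (-1 / (1 - t))) (at t)"
          unfolding H_def by (intro DERIV_add DERIV_cmult der[OF t1(1,2)] dl)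
        moreover have "GG c1 c2 c3 t (U t) / (1 - t^2) + (g0/2) * (-1 / (1 - t)) \<ge> 0"
        proof -
          have "g0 / (2*(1-t)) \<le> g0 / (1 - t^2)"
            using hx[OF t1(1,2)] g0 by (intro divide_left_mono) auto
          also have "\<dots> \<le> GG c1 c2 c3 t (U t) / (1 - t^2)"
            using hx[OF t1(1,2)] b(2)[OF t1(3,2)] by (intro divide_right_mono) auto
          finally show ?thesis using t1 by (simp add: field_simps)
        qed
        ultimately show "\<exists>y. (H has_real_derivative y) (at t) \<and> 0 \<le> y" by blast
      next
        have "continuous_on {x3..x} U" using Ucont[of x3 x] b(2)[of x3] x3 that by auto
        moreover have "continuous_on {x3..x} (\<lambda>t. ln (1 - t))" using that
          by (intro continuous_intros) auto
        ultimately show "continuous_on {x3..x} H" unfolding H_def using that by (intro continuous_intros) auto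
      qed
      have ev1: "eventually (\<lambda>x. U x < l + 1) (at_left 1)" using order_tendstoD(2)[OF lim] by simp
      have ev2: "eventually (\<lambda>x. ln (1 - x) < - ((2/g0) * (l + 1 - H x3))) (at_left 1)" by (rule ln_to_bot)
      have ev3: "eventually (\<lambda>x. x3 < x) (at_left 1)" unfolding eventually_at_left_field using x3 by auto
      obtain x where x: "U x < l + 1" "ln (1 - x) < - ((2/g0) * (l + 1 - H x3))" "x3 < x" "x < 1"
        using eventually_happens'[OF _ eventually_conj[OF ev1 eventually_conj[OF ev2 eventually_conj[OF ev3 evx0]]]] by force
      have "H x3 \<le> U x + (g0/2) * ln (1 - x)" using Hmono[of x] x by (simp add: H_def)
      moreover have "(g0/2) * ln (1 - x) < (g0/2) * (- ((2/g0) * (l + 1 - H x3)))"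
        using x(2) g0 by (intro mult_strict_left_mono) auto
      moreover have "(g0/2) * (- ((2/g0) * (l + 1 - H x3))) = H x3 - l - 1" using g0 by (simp add: field_simps)
      ultimately show False using x(1) by linarith
    next
      case False
      hence neg: "GG c1 c2 c3 1 l < 0" using nz by simp
      define g0 where "g0 = - GG c1 c2 c3 1 l / 2"
      have g0: "g0 > 0" using neg by (simp add: g0_def)
      have "eventually (\<lambda>x. GG c1 c2 c3 x (U x) < - g0 \<and> x0 < x \<and> x < 1) (at_left 1)"
        using order_tendstoD(2)[OF Glim, of "-g0"] neg evx0 by (auto simp: g0_def intro: eventually_conj)
      then obtain b where b: "b < 1" "\<And>y. b < y \<Longrightarrow> y < 1 \<Longrightarrow> GG c1 c2 c3 y (U y) < - g0 \<and> x0 < y"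
        unfolding eventually_at_left_field by blast
      define x3 where "x3 = (b + 1)/2"
      have x3: "b < x3" "x3 < 1" using b by (auto simp: x3_def)
      define H where "H x = - U x + (g0/2) * ln (1 - x)" for x
      have Hmono: "H x3 \<le> H x" if "x3 \<le> x" "x < 1" for x
      proof (rule DERIV_nonneg_imp_increasing_open[OF that(1)])
        fix t assume t: "x3 < t" "t < x"
        have t1: "x0 < t" "t < 1" "b < t" using b(2)[of t] t x3 that by auto
        have dl: "((\<lambda>x. ln (1 - x)) has_real_derivative (-1 / (1 - t))) (at t)"
          using t1 by (auto intro!: derivative_eq_intros simp: field_simps)
        have "(H has_real_derivative - (GG c1 c2 c3 t (U t) / (1 - t^2)) + (g0/2) * (-1 / (1 - t))) (at t)"
          unfolding H_def by (intro DERIV_add DERIV_cmult DERIV_minus der[OF t1(1,2)] dl)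
        moreover have "- (GG c1 c2 c3 t (U t) / (1 - t^2)) + (g0/2) * (-1 / (1 - t)) \<ge> 0"
        proof -
          have "g0 / (2*(1-t)) \<le> g0 / (1 - t^2)"
            using hx[OF t1(1,2)] g0 by (intro divide_left_mono) auto
          also have "\<dots> \<le> - GG c1 c2 c3 t (U t) / (1 - t^2)"
            using hx[OF t1(1,2)] b(2)[OF t1(3,2)] by (intro divide_right_mono) auto
          finally show ?thesis using t1 by (simp add: field_simps)
        qed
        ultimately show "\<exists>y. (H has_real_derivative y) (at t) \<and> 0 \<le> y" by blast
      next
        have "continuous_on {x3..x} U" using Ucont[of x3 x] b(2)[of x3] x3 that by auto
        moreover have "continuous_on {x3..x} (\<lambda>t. ln (1 - t))" using that
          by (intro continuous_intros) auto
        ultimately show "continuous_on {x3..x} H" unfolding H_def using that by (intro continuous_intros) auto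
      qed
      have ev1: "eventually (\<lambda>x. l - 1 < U x) (at_left 1)" using order_tendstoD(1)[OF lim] by simp
      have ev2: "eventually (\<lambda>x. ln (1 - x) < - ((2/g0) * (1 - l - H x3))) (at_left 1)" by (rule ln_to_bot)
      have ev3: "eventually (\<lambda>x. x3 < x) (at_left 1)" unfolding eventually_at_left_field using x3 by auto
      obtain x where x: "l - 1 < U x" "ln (1 - x) < - ((2/g0) * (1 - l - H x3))" "x3 < x" "x < 1"
        using eventually_happens'[OF _ eventually_conj[OF ev1 eventually_conj[OF ev2 eventually_conj[OF ev3 evx0]]]] by force
      have "H x3 \<le> - U x + (g0/2) * ln (1 - x)" using Hmono[of x] x by (simp add: H_def)
      moreover have "(g0/2) * ln (1 - x) < (g0/2) * (- ((2/g0) * (1 - l - H x3)))"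
        using x(2) g0 by (intro mult_strict_left_mono) auto
      moreover have "(g0/2) * (- ((2/g0) * (1 - l - H x3))) = H x3 + l - 1" using g0 by (simp add: field_simps)
      ultimately show False using x(1) by linarith
    qed
  qed
  thus ?thesis using GG1_roots[OF c2] lim by blast
qed


lemma solves_mono: "solves_on c1 c2 c3 U S \<Longrightarrow> T \<subseteq> S \<Longrightarrow> solves_on c1 c2 c3 U T"
  unfolding solves_on_def by blast

lemma solves_reflect:
  assumes "solves_on c1 c2 c3 U S" "\<And>y. y \<in> T \<Longrightarrow> -y \<in> S"
  shows "solves_on c2 c1 c3 (\<lambda>y. - U (- y)) T"
  unfolding solves_on_def
proof
  fix y assume y: "y \<in> T"
  obtain D where D: "(U has_real_derivative D) (at (-y))" "(1 - (-y)^2) * D + 2 * (-y) * U (-y) + (U (-y))^2 / 2 = Pc c1 c2 c3 (-y)"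
    using assms y unfolding solves_on_def by blast
  have m1: "((\<lambda>y. -y) has_real_derivative -1) (at y)" by (rule derivative_eq_intros refl)+
  have "((\<lambda>y. U (- y)) has_real_derivative D * (-1)) (at y)"
    using DERIV_chain2[where f=U and g="\<lambda>y. -y", OF D(1) m1] by simp
  hence "((\<lambda>y. - U (- y)) has_real_derivative - (D * (-1))) (at y)" by (rule DERIV_minus)
  hence "((\<lambda>y. - U (- y)) has_real_derivative D) (at y)" by simp
  moreover have "(1 - y^2) * D + 2 * y * (- U (- y)) + (- U (- y))^2 / 2 = Pc c2 c1 c3 y"
    using D(2) by (simp add: Pc_def algebra_simps)
  ultimately show "\<exists>D. ((\<lambda>y. - U (- y)) has_real_derivative D) (at y) \<and>
      (1 - y^2) * D + 2 * y * (- U (- y)) + (- U (- y))^2 / 2 = Pc c2 c1 c3 y" by blast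
qed

lemma L_eq:
  assumes c1: "c1 \<ge> -1" and c2: "c2 \<ge> -1"
  shows "(1 - x^2) * (-(2 + sqrt (1+c1) + sqrt (1+c2))) + 2 * x * Lf c1 c2 x + (Lf c1 c2 x)^2 / 2
         = Pc c1 c2 (c3bar c1 c2) x"
proof -
  define s1 s2 where "s1 = sqrt (1+c1)" and "s2 = sqrt (1+c2)"
  have e1: "c1 = s1^2 - 1" and e2: "c2 = s2^2 - 1" using c1 c2 by (auto simp: s1_def s2_def)
  have Lx: "Lf c1 c2 x = (s1 - s2) - (2 + s1 + s2) * x" by (simp add: Lf_def s1_def s2_def)
  have c3b: "c3bar c1 c2 = - (1/2) * (s1 + s2) * (s1 + s2 + 2)" by (simp add: c3bar_def s1_def s2_def)
  show ?thesis unfolding s1_def[symmetric] s2_def[symmetric] Pc_def Lx c3b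
    by (simp add: e1 e2 field_simps power2_eq_square)
qed

lemma Pc_diff: "Pc c1 c2 c3 x - Pc c1 c2 c3' x = (c3 - c3') * (1 - x^2)"
  by (simp add: Pc_def algebra_simps)

lemma uniq2:
  assumes ab: "-1 < a" "a < b" "b < 1" and S: "{a..b} \<subseteq> S" "S \<subseteq> {-1<..<1}"
    and s1: "solves_on c1 c2 c3 U1 S" and s2: "solves_on c1 c2 c3 U2 S"
    and eq: "U1 a = U2 a"
  shows "\<forall>x\<in>{a<..<b}. U1 x = U2 x"
proof -
  have inS: "x \<in> S" "\<bar>x\<bar> < 1" if "x \<in> {a..b}" for x
  proof -
    show "x \<in> S" using that S by auto
    hence "x \<in> {-1<..<1}" using S by auto
    thus "\<bar>x\<bar> < 1" by auto
  qed
  have der1: "(U1 has_real_derivative GG c1 c2 c3 x (U1 x) / (1 - x^2)) (at x)" if "x \<in> {a..b}" for x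
    using solves_deriv[OF s1 inS[OF that]] .
  have der2: "(U2 has_real_derivative GG c1 c2 c3 x (U2 x) / (1 - x^2)) (at x)" if "x \<in> {a..b}" for x
    using solves_deriv[OF s2 inS[OF that]] .
  have c1: "continuous_on {a..b} U1"
    by (rule continuous_at_imp_continuous_on) (use der1 DERIV_isCont in blast)
  have c2: "continuous_on {a..b} U2"
    by (rule continuous_at_imp_continuous_on) (use der2 DERIV_isCont in blast)
  have "continuous_on {a..b} (\<lambda>x. 2*x + (U1 x + U2 x)/2)" by (intro continuous_intros c1 c2) auto
  then obtain xm where xm: "xm \<in> {a..b}" "\<And>y. y \<in> {a..b} \<Longrightarrow> 2*xm + (U1 xm + U2 xm)/2 \<le> 2*y + (U1 y + U2 y)/2"
    using continuous_attains_inf[of "{a..b}"] ab by force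
  have "continuous_on {a..b} (\<lambda>x. 1 - x^2)" by (intro continuous_intros)
  then obtain xq where xq: "xq \<in> {a..b}" "\<And>y. y \<in> {a..b} \<Longrightarrow> 1 - xq^2 \<le> 1 - y^2"
    using continuous_attains_inf[of "{a..b}"] ab by force
  define m where "m = 1 - xq^2"
  have "\<bar>xq\<bar> < 1" using xq(1) ab by auto
  hence "xq^2 < 1" by (simp add: abs_square_less_1)
  hence m: "m > 0" by (simp add: m_def)
  define K0 where "K0 = max 0 (- (2*xm + (U1 xm + U2 xm)/2))"
  show ?thesis
  proof (rule uniq[where C="K0/m"])
    show "-1 \<le> a" "a < b" "b \<le> 1" using ab by auto
    have sub: "{a<..<b} \<subseteq> S" using S(1) by auto
    show "solves_on c1 c2 c3 U1 {a<..<b}" by (rule solves_mono[OF s1 sub])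
    show "solves_on c1 c2 c3 U2 {a<..<b}" by (rule solves_mono[OF s2 sub])
    have "((\<lambda>x. U1 x - U2 x) \<longlongrightarrow> U1 a - U2 a) (at_right a)"
    proof -
      have "isCont (\<lambda>x. U1 x - U2 x) a" using der1[of a] der2[of a] ab
        by (intro continuous_intros DERIV_isCont) auto
      thus ?thesis unfolding isCont_def by (rule tendsto_within_subset) simp
    qed
    thus "((\<lambda>x. U1 x - U2 x) \<longlongrightarrow> 0) (at_right a)" using eq by simp
    fix x assume x: "a < x" "x < b"
    have "2*x + (U1 x + U2 x)/2 \<ge> - K0" using xm(2)[of x] x unfolding K0_def by auto
    moreover have "K0 \<le> K0/m * (1 - x^2)"
    proof -
      have "m \<le> 1 - x^2" using xq(2)[of x] x by (simp add: m_def)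
      hence "K0 * m \<le> K0 * (1 - x^2)" by (intro mult_left_mono) (auto simp: K0_def)
      thus ?thesis using m by (simp add: field_simps)
    qed
    ultimately show "2*x + (U1 x + U2 x)/2 \<ge> - (K0/m) * (1 - x^2)" by simp
  qed
qed


lemma Vplus_gt:
  assumes c1: "c1 \<ge> -1" and c2: "c2 \<ge> -1" and c3: "c3 > c3bar c1 c2" and x: "-1 < x" "x < 1"
  shows "Lf c1 c2 x < Vplus c1 c2 c3 x"
proof -
  interpret hpar "pP c1 c2" "rR c1 c2 c3" "cC c1" by (rule hpar_inst[OF c1 c2 c3])
  define z where "z = (1+x)/2"
  have z: "0 < z" "z < 1" using x by (auto simp: z_def)
  have A: "AA (pP c1 c2) (rR c1 c2 c3) (cC c1) z > 0" by (rule AA_pos[OF z])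
  have F: "FF (pP c1 c2) (rR c1 c2 c3) (cC c1) z \<ge> 1" using FF_ge1 z by auto
  have "4 * (1 - z) * AA (pP c1 c2) (rR c1 c2 c3) (cC c1) z / FF (pP c1 c2) (rR c1 c2 c3) (cC c1) z > 0"
    using A F z by (intro divide_pos_pos mult_pos_pos) auto
  thus ?thesis unfolding Vplus_def z_def by simp
qed

lemma Vplus_lim:
  assumes c1: "c1 \<ge> -1" and c2: "c2 \<ge> -1" and c3: "c3 > c3bar c1 c2"
  shows "(Vplus c1 c2 c3 \<longlongrightarrow> tau2 c1) (at_right (-1))"
proof -
  interpret hpar "pP c1 c2" "rR c1 c2 c3" "cC c1" by (rule hpar_inst[OF c1 c2 c3])
  have zc: "isCont (\<lambda>x::real. (1+x)/2) (-1)" by (intro continuous_intros) auto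
  have cA: "isCont (\<lambda>x. AA (pP c1 c2) (rR c1 c2 c3) (cC c1) ((1+x)/2)) (-1)"
    by (rule isCont_o2[OF zc]) (use AA_cont[of 0] in simp)
  have cF: "isCont (\<lambda>x. FF (pP c1 c2) (rR c1 c2 c3) (cC c1) ((1+x)/2)) (-1)"
    by (rule isCont_o2[OF zc]) (use FF_cont[of 0] in simp)
  have "isCont (Vplus c1 c2 c3) (-1)"
    unfolding Vplus_def[abs_def] Lf_def by (intro continuous_intros cA cF) (auto simp: FF_0)
  moreover have "Vplus c1 c2 c3 (-1) = tau2 c1"
    by (simp add: Vplus_def Lf_def FF_0 AA_0 tau2_def)
  ultimately show ?thesis unfolding isCont_def by (metis tendsto_within_subset subset_UNIV)
qed

lemma Lf_lim1: "(Lf c1 c2 \<longlongrightarrow> tau1' c2) (at_left 1)"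
proof -
  have "(Lf c1 c2 \<longlongrightarrow> Lf c1 c2 1) (at_left 1)"
    unfolding Lf_def[abs_def] by (intro tendsto_intros)
  moreover have "Lf c1 c2 1 = tau1' c2" by (simp add: Lf_def tau1'_def)
  ultimately show ?thesis by simp
qed


lemma agree_part:
  fixes c1 c2 c3 \<delta>p :: real and Up :: "real \<Rightarrow> real" and a :: "nat \<Rightarrow> real"
  assumes c1: "c1 \<ge> -1" and c2: "c2 \<ge> -1" and c3: "c3 > c3bar c1 c2"
    and dp: "\<delta>p > 0" and a0: "a 0 = tau2 c1"
    and Up_series: "\<forall>x\<in>{-1<..<-1+\<delta>p}. (\<lambda>n. a n * (1 + x)^n) sums (Up x)"
    and Up_sol: "solves_on c1 c2 c3 Up {-1<..<-1+\<delta>p}"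
  shows "\<forall>x\<in>{-1<..<-1+\<delta>p} \<inter> {-1<..<1}. Vplus c1 c2 c3 x = Up x"
proof -
  define V where "V = Vplus c1 c2 c3"
  define s1 s2 where "s1 = sqrt (1+c1)" and "s2 = sqrt (1+c2)"
  have s1: "s1 \<ge> 0" "s2 \<ge> 0" using c1 c2 by (auto simp: s1_def s2_def)
  define d' where "d' = min \<delta>p 2"
  have d': "d' > 0" "d' \<le> 2" "d' \<le> \<delta>p" using dp by (auto simp: d'_def)
  have seteq: "{-1<..<-1+\<delta>p} \<inter> {-1<..<1} = {-1<..<-1+d'}" by (auto simp: d'_def)
  have Vsol: "solves_on c1 c2 c3 V {-1<..<1}" unfolding V_def by (rule Vplus_solves[OF c1 c2 c3])
  have Usol': "solves_on c1 c2 c3 Up {-1<..<-1+d'}" by (rule solves_mono[OF Up_sol]) (use d' in auto)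
  have Vsol': "solves_on c1 c2 c3 V {-1<..<-1+d'}" by (rule solves_mono[OF Vsol]) (use d' in auto)
  obtain \<epsilon> C where eps: "\<epsilon> > 0" and bC: "\<And>x. x \<in> {-1<..<-1+\<epsilon>} \<Longrightarrow> \<bar>Up x - a 0\<bar> \<le> C * (1 + x)"
    using series_bound[OF dp Up_series] by blast
  define e' where "e' = min (min \<epsilon> d') 1"
  have e': "e' > 0" "e' \<le> \<epsilon>" "e' \<le> d'" "e' \<le> 1" using eps d' by (auto simp: e'_def)
  have step1: "\<forall>x\<in>{-1<..<-1+e'}. Up x = V x"
  proof (rule uniq[where C="max 0 ((C + 2 + s1 + s2)/2)"])
    show "-1 \<le> (-1::real)" "-1 < -1 + e'" "-1 + e' \<le> 1" using e' by auto
    show "solves_on c1 c2 c3 Up {-1<..<-1+e'}" by (rule solves_mono[OF Usol']) (use e' in auto)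
    show "solves_on c1 c2 c3 V {-1<..<-1+e'}" by (rule solves_mono[OF Vsol']) (use e' in auto)
    have Ulim: "(Up \<longlongrightarrow> a 0) (at_right (-1))"
    proof (rule tendsto_sandwich[where f="\<lambda>x. a 0 - C * (1 + x)" and h="\<lambda>x. a 0 + C * (1 + x)"])
      have ev: "eventually (\<lambda>x. x \<in> {-1<..<-1+\<epsilon>}) (at_right (-1::real))"
        unfolding eventually_at_right_field using eps by (intro exI[of _ "-1+\<epsilon>"]) auto
      show "eventually (\<lambda>x. a 0 - C * (1 + x) \<le> Up x) (at_right (-1))"
        using ev by (rule eventually_mono) (use bC in force)
      show "eventually (\<lambda>x. Up x \<le> a 0 + C * (1 + x)) (at_right (-1))"
        using ev by (rule eventually_mono) (use bC in force)
      have "((\<lambda>x. a 0 - C * (1 + x)) \<longlongrightarrow> a 0 - C * (1 + -1)) (at_right (-1))"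
        by (intro tendsto_intros)
      thus "((\<lambda>x. a 0 - C * (1 + x)) \<longlongrightarrow> a 0) (at_right (-1))" by simp
      have "((\<lambda>x. a 0 + C * (1 + x)) \<longlongrightarrow> a 0 + C * (1 + -1)) (at_right (-1))"
        by (intro tendsto_intros)
      thus "((\<lambda>x. a 0 + C * (1 + x)) \<longlongrightarrow> a 0) (at_right (-1))" by simp
    qed
    have "((\<lambda>x. Up x - V x) \<longlongrightarrow> a 0 - tau2 c1) (at_right (-1))"
      unfolding V_def by (intro tendsto_intros Ulim Vplus_lim[OF c1 c2 c3])
    thus "((\<lambda>x. Up x - V x) \<longlongrightarrow> 0) (at_right (-1))" using a0 by simp
    fix x assume x: "-1 < x" "x < -1 + e'"
    define K where "K = max 0 ((C + 2 + s1 + s2)/2)"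
    have hU: "Up x \<ge> 2 + 2 * s1 - C * (1 + x)" using bC[of x] x e' a0 by (auto simp: tau2_def s1_def)
    have LV: "V x > Lf c1 c2 x" unfolding V_def using Vplus_gt[OF c1 c2 c3, of x] x e' by auto
    have Lfx: "Lf c1 c2 x = 2 + 2 * s1 - (2 + s1 + s2) * (1 + x)"
      by (simp add: Lf_def s1_def s2_def algebra_simps)
    have t0: "1 + x > 0" using x by simp
    have main: "2*x + (Up x + V x)/2 \<ge> - ((C + 2 + s1 + s2)/2) * (1 + x)"
    proof -
      define A B where "A = C * (1+x)" and "B = (2 + s1 + s2) * (1+x)"
      have e: "- ((C + 2 + s1 + s2)/2) * (1 + x) = - (A + B)/2"
        by (simp add: A_def B_def algebra_simps add_divide_distrib)
      have "Up x \<ge> 2 + 2 * s1 - A" using hU by (simp add: A_def)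
      moreover have "V x > 2 + 2 * s1 - B" using LV Lfx by (simp add: B_def)
      ultimately show ?thesis unfolding e using s1 x by (simp add: field_simps)
    qed
    have "- K * (1 + x) \<le> - ((C + 2 + s1 + s2)/2) * (1 + x)"
      using t0 by (intro mult_right_mono) (auto simp: K_def)
    moreover have "- K * (1 - x^2) \<le> - K * (1 + x)"
    proof -
      have "1 + x \<le> 1 - x^2"
      proof -
        have "1 - x^2 = (1 + x) * (1 - x)" by (simp add: power2_eq_square algebra_simps)
        moreover have "(1 + x) * 1 \<le> (1 + x) * (1 - x)" using t0 x e' by (intro mult_left_mono) auto
        ultimately show ?thesis by simp
      qed
      thus ?thesis by (intro mult_left_mono_neg) (auto simp: K_def)
    qed
    ultimately show "2*x + (Up x + V x)/2 \<ge> - (max 0 ((C + 2 + s1 + s2)/2)) * (1 - x^2)"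
      using main unfolding K_def by linarith
  qed
  have "\<forall>x\<in>{-1<..<-1+d'}. V x = Up x"
  proof
    fix x assume x: "x \<in> {-1<..<-1+d'}"
    show "V x = Up x"
    proof (cases "x < -1 + e'")
      case True thus ?thesis using step1 x by auto
    next
      case False
      define a' b' where "a' = -1 + e'/2" and "b' = (x + (-1 + d'))/2"
      have ab: "-1 < a'" "a' < b'" "b' < 1" "a' < x" "x < b'" using x e' d' False by (auto simp: a'_def b'_def)
      have "\<forall>y\<in>{a'<..<b'}. V y = Up y"
      proof (rule uniq2[OF ab(1-3)])
        show "{a'..b'} \<subseteq> {-1<..<-1+d'}" using ab x by (auto simp: b'_def)
        show "{-1<..<-1+d'} \<subseteq> {-1<..<1::real}" using d' by auto
        show "solves_on c1 c2 c3 V {-1<..<-1+d'}" by (rule Vsol')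
        show "solves_on c1 c2 c3 Up {-1<..<-1+d'}" by (rule Usol')
        show "V a' = Up a'" using step1 e' by (auto simp: a'_def)
      qed
      thus ?thesis using ab by auto
    qed
  qed
  thus ?thesis using seteq unfolding V_def by auto
qed


lemma alg2:
  fixes h k t L Pb P d v :: real
  assumes "h * (-k) + 2 * t * L + L^2 / 2 = Pb" "P - Pb = d * h"
  shows "(P - 2 * t * v - v^2 / 2) + h * k = d * h - (v - L) * (2 * t + (v + L) / 2)"
proof -
  have "P = Pb + d * h" using assms(2) by simp
  thus ?thesis using assms(1) by (simp add: field_simps power2_eq_square)
qed

lemma Vplus_lim1:
  assumes c1: "c1 \<ge> -1" and c2: "c2 \<ge> -1" and c3: "c3 > c3bar c1 c2"
  shows "(Vplus c1 c2 c3 \<longlongrightarrow> tau2' c2) (at_left 1)"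
proof -
  define V where "V = Vplus c1 c2 c3"
  define s1 s2 where "s1 = sqrt (1+c1)" and "s2 = sqrt (1+c2)"
  have s: "s1 \<ge> 0" "s2 \<ge> 0" using c1 c2 by (auto simp: s1_def s2_def)
  have Vsol: "solves_on c1 c2 c3 V {-1<..<1}" unfolding V_def by (rule Vplus_solves[OF c1 c2 c3])
  have der: "(V has_real_derivative GG c1 c2 c3 x (V x) / (1 - x^2)) (at x)" if "-1 < x" "x < 1" for x
    using solves_deriv[OF Vsol] that by auto
  have hx: "1 - x^2 > 0" if "-1 < x" "x < 1" for x :: real
  proof -
    have "\<bar>x\<bar> < 1" using that by auto
    thus ?thesis by (simp add: abs_square_less_1)
  qed
  have gt: "Lf c1 c2 x < V x" if "-1 < x" "x < 1" for x
    unfolding V_def using Vplus_gt[OF c1 c2 c3] that by auto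
  define Pm where "Pm = 2 * \<bar>c1\<bar> + 2 * \<bar>c2\<bar> + \<bar>c3\<bar>"
  define Kb where "Kb = max (V 0) 0 + 5 + 2 * Pm"
  have Pm0: "Pm \<ge> 0" by (simp add: Pm_def)
  have Kb: "Kb \<ge> 5 + 2 * Pm" "Kb \<ge> V 0" using Pm0 by (auto simp: Kb_def max_def)
  have GKneg: "GG c1 c2 c3 x Kb < 0" if x: "-1 < x" "x < 1" for x
  proof -
    have t1: "c1 * (1 - x) \<le> 2 * \<bar>c1\<bar>"
    proof -
      have "c1 * (1 - x) \<le> \<bar>c1\<bar> * \<bar>1 - x\<bar>" by (metis abs_ge_self abs_mult)
      also have "\<dots> \<le> \<bar>c1\<bar> * 2" using x by (intro mult_left_mono) auto
      finally show ?thesis by simp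
    qed
    have t2: "c2 * (1 + x) \<le> 2 * \<bar>c2\<bar>"
    proof -
      have "c2 * (1 + x) \<le> \<bar>c2\<bar> * \<bar>1 + x\<bar>" by (metis abs_ge_self abs_mult)
      also have "\<dots> \<le> \<bar>c2\<bar> * 2" using x by (intro mult_left_mono) auto
      finally show ?thesis by simp
    qed
    have t3: "c3 * (1 - x^2) \<le> \<bar>c3\<bar>"
    proof -
      have "c3 * (1 - x^2) \<le> \<bar>c3\<bar> * \<bar>1 - x^2\<bar>" by (metis abs_ge_self abs_mult)
      also have "\<dots> \<le> \<bar>c3\<bar> * 1" using hx[OF x] by (intro mult_left_mono) auto
      finally show ?thesis by simp
    qed
    have P: "Pc c1 c2 c3 x \<le> Pm" unfolding Pc_def Pm_def using t1 t2 t3 by linarith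
    have "(- 2 * x) * Kb \<le> 2 * Kb" using x Kb Pm0 by (intro mult_right_mono) auto
    hence mx: "- (2 * x * Kb) \<le> 2 * Kb" by simp
    have kk: "Kb * Kb \<ge> 5 * Kb" using Kb Pm0 by (intro mult_right_mono) auto
    have "Pc c1 c2 c3 x - 2 * x * Kb - Kb * Kb / 2 < 0" using P Kb Pm0 mx kk by linarith
    thus ?thesis unfolding GG_def by (simp add: power2_eq_square)
  qed
  have upper: "V y < Kb" if "0 < y" "y < 1" for y
  proof -
    have "Kb - V y > 0"
    proof (rule cross[where f="\<lambda>x. Kb - V x" and f'="\<lambda>x. - (GG c1 c2 c3 x (V x) / (1 - x^2))" and a="-1" and b=1 and x=0])
      fix t :: real assume t: "-1 < t" "t < 1"
      show "((\<lambda>x. Kb - V x) has_real_derivative - (GG c1 c2 c3 t (V t) / (1 - t^2))) (at t)"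
        using der[OF t] by (auto intro!: derivative_eq_intros)
      assume "Kb - V t = 0"
      hence "V t = Kb" by simp
      thus "- (GG c1 c2 c3 t (V t) / (1 - t^2)) > 0" using GKneg[OF t] hx[OF t] by (simp add: divide_neg_pos)
    qed (use that Kb in auto)
    thus ?thesis by simp
  qed
  have lower: "s1 - s2 - (2 + s1 + s2) \<le> V y" if "0 < y" "y < 1" for y
  proof -
    have "(2 + s1 + s2) * y \<le> (2 + s1 + s2) * 1" using that s by (intro mult_left_mono) auto
    hence "s1 - s2 - (2 + s1 + s2) \<le> Lf c1 c2 y" by (simp add: Lf_def s1_def s2_def)
    thus ?thesis using gt[of y] that by simp
  qed
  obtain l where lim: "(V \<longlongrightarrow> l) (at_left 1)" and lr: "l = tau1' c2 \<or> l = tau2' c2"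
    using limit_at_1[OF c2, of 0 c1 c3 V "s1 - s2 - (2 + s1 + s2)" Kb]
      solves_mono[OF Vsol, of "{0<..<1}"] upper lower by force
  show ?thesis
  proof (cases "l = tau2' c2")
    case True thus ?thesis using lim V_def by simp
  next
    case False
    hence l1: "l = tau1' c2" using lr by simp
    show ?thesis
    proof (cases "s2 = 0")
      case True
      hence "tau1' c2 = tau2' c2" by (simp add: tau1'_def tau2'_def s2_def)
      thus ?thesis using lim l1 V_def by simp
    next
      case False
      hence s2p: "s2 > 0" using s by simp
      define w where "w x = V x - Lf c1 c2 x" for x
      define \<delta> where "\<delta> = c3 - c3bar c1 c2"
      have dpos: "\<delta> > 0" using c3 by (simp add: \<delta>_def)
      have wlim: "(w \<longlongrightarrow> 0) (at_left 1)"
      proof -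
        have "(w \<longlongrightarrow> l - tau1' c2) (at_left 1)" unfolding w_def by (intro tendsto_intros lim Lf_lim1)
        thus ?thesis using l1 by simp
      qed
      have numlim: "((\<lambda>x. 2 * x + (V x + Lf c1 c2 x)/2) \<longlongrightarrow> 2 * 1 + (l + tau1' c2)/2) (at_left 1)"
        by (intro tendsto_intros lim Lf_lim1) auto
      have "2 * 1 + (l + tau1' c2)/2 = - 2 * s2" using l1 by (simp add: tau1'_def s2_def field_simps)
      hence "2 * 1 + (l + tau1' c2)/2 < 0" using s2p by simp
      hence "eventually (\<lambda>x. 2 * x + (V x + Lf c1 c2 x)/2 < 0) (at_left 1)"
        using order_tendstoD(2)[OF numlim] by blast
      then obtain b where b: "b < 1" "\<And>y. b < y \<Longrightarrow> y < 1 \<Longrightarrow> 2 * y + (V y + Lf c1 c2 y)/2 < 0"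
        unfolding eventually_at_left_field by blast
      define b' where "b' = max b 0"
      define x3 where "x3 = (b' + 1)/2"
      have x3: "b' < x3" "x3 < 1" "0 < x3" using b by (auto simp: x3_def b'_def)
      have wder: "(w has_real_derivative GG c1 c2 c3 t (V t) / (1 - t^2) + (2 + s1 + s2)) (at t)"
        if "-1 < t" "t < 1" for t
      proof -
        have "(Lf c1 c2 has_real_derivative - (2 + s1 + s2)) (at t)"
          unfolding Lf_def[abs_def] s1_def s2_def by (auto intro!: derivative_eq_intros)
        from DERIV_diff[OF der[OF that] this] have "(w has_real_derivative GG c1 c2 c3 t (V t) / (1 - t^2) - (- (2 + s1 + s2))) (at t)"
          unfolding w_def[abs_def] .
        thus ?thesis by (simp only: diff_minus_eq_add)
      qed
      have wder_pos: "GG c1 c2 c3 t (V t) / (1 - t^2) + (2 + s1 + s2) \<ge> 0" if t: "b' < t" "t < 1" for t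
      proof -
        have t1: "-1 < t" "t < 1" "b < t" using t by (auto simp: b'_def)
        have Leq: "(1 - t^2) * (-(2 + s1 + s2)) + 2 * t * Lf c1 c2 t + (Lf c1 c2 t)^2 / 2 = Pc c1 c2 (c3bar c1 c2) t"
          using L_eq[OF c1 c2, of t] by (simp add: s1_def s2_def)
        have "(1 - t^2) * (GG c1 c2 c3 t (V t) / (1 - t^2) + (2 + s1 + s2)) = GG c1 c2 c3 t (V t) + (1 - t^2) * (2 + s1 + s2)"
          using hx[OF t1(1,2)] by (simp add: field_simps)
        also have "\<dots> = \<delta> * (1 - t^2) - w t * (2 * t + (V t + Lf c1 c2 t)/2)"
          using alg2[OF Leq, of "Pc c1 c2 c3 t" \<delta> "V t"] Pc_diff[of c1 c2 c3 t "c3bar c1 c2"]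
          unfolding GG_def w_def \<delta>_def by (simp add: mult.commute)
        also have "\<dots> \<ge> 0"
        proof -
          have "w t > 0" using gt[OF t1(1,2)] by (simp add: w_def)
          hence "w t * (2 * t + (V t + Lf c1 c2 t)/2) \<le> 0" using b(2)[OF t1(3,2)]
            by (simp add: mult_pos_neg less_imp_le)
          moreover have "\<delta> * (1 - t^2) \<ge> 0" using dpos hx[OF t1(1,2)] by simp
          ultimately show ?thesis by linarith
        qed
        finally show ?thesis using hx[OF t1(1,2)] by (simp add: zero_le_mult_iff)
      qed
      have wmono: "w x3 \<le> w x" if "x3 \<le> x" "x < 1" for x
      proof (rule DERIV_nonneg_imp_increasing_open[OF that(1)])
        fix t assume t: "x3 < t" "t < x"
        show "\<exists>y. (w has_real_derivative y) (at t) \<and> 0 \<le> y"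
          using wder[of t] wder_pos[of t] t x3 that by force
      next
        show "continuous_on {x3..x} w"
        proof (rule continuous_at_imp_continuous_on, intro ballI)
          fix t assume "t \<in> {x3..x}"
          thus "isCont w t" using wder[of t] that x3 DERIV_isCont by force
        qed
      qed
      have "w x3 \<le> 0"
      proof (rule tendsto_lowerbound[OF wlim])
        show "\<forall>\<^sub>F x in at_left 1. w x3 \<le> w x"
          unfolding eventually_at_left_field using x3 wmono by (intro exI[of _ x3]) auto
      qed simp
      moreover have "w x3 > 0" using gt[of x3] x3 by (simp add: w_def)
      ultimately show ?thesis by simp
    qed
  qed
qed


theorem lemma2p7:
  fixes c1 c2 c3 \<delta>p \<delta>m :: real and Up Um :: "real \<Rightarrow> real" and a b :: "nat \<Rightarrow> real"
  assumes c1: "c1 \<ge> -1" and c2: "c2 \<ge> -1" and c3: "c3 > c3bar c1 c2"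
    and dp: "\<delta>p > 0"
    and a0: "a 0 = tau2 c1"
    and Up_series: "\<forall>x\<in>{-1<..<-1+\<delta>p}. (\<lambda>n. a n * (1 + x)^n) sums (Up x)"
    and Up_sol: "solves_on c1 c2 c3 Up {-1<..<-1+\<delta>p}"
    and dm: "\<delta>m > 0"
    and b0: "b 0 = tau1' c2"
    and Um_series: "\<forall>x\<in>{1-\<delta>m<..<1}. (\<lambda>n. b n * (1 - x)^n) sums (Um x)"
    and Um_sol: "solves_on c1 c2 c3 Um {1-\<delta>m<..<1}"
  shows "\<exists>Vp Vm.
           solves_on c1 c2 c3 Vp {-1<..<1} \<and>
           (\<forall>x\<in>{-1<..<-1+\<delta>p} \<inter> {-1<..<1}. Vp x = Up x) \<and>
           (Vp \<longlongrightarrow> tau2' c2) (at_left 1) \<and>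
           solves_on c1 c2 c3 Vm {-1<..<1} \<and>
           (\<forall>x\<in>{1-\<delta>m<..<1} \<inter> {-1<..<1}. Vm x = Um x) \<and>
           (Vm \<longlongrightarrow> tau1 c1) (at_right (-1)) \<and>
           (\<forall>x\<in>{-1<..<1}. Vm x < Vp x)"
proof -
  define W where "W y = - Um (- y)" for y
  define b' where "b' n = - b n" for n
  have c3': "c3 > c3bar c2 c1" using c3 by (simp add: c3bar_def add.commute)
  have b'0: "b' 0 = tau2 c2" using b0 by (simp add: b'_def tau1'_def tau2_def)
  have Wser: "\<forall>x\<in>{-1<..<-1+\<delta>m}. (\<lambda>n. b' n * (1 + x)^n) sums (W x)"
  proof
    fix x assume x: "x \<in> {-1<..<-1+\<delta>m}"
    hence "-x \<in> {1-\<delta>m<..<1}" by auto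
    from sums_minus[OF Um_series[rule_format, OF this]]
    show "(\<lambda>n. b' n * (1 + x)^n) sums (W x)" by (simp add: b'_def W_def)
  qed
  have Wsol: "solves_on c2 c1 c3 W {-1<..<-1+\<delta>m}"
    unfolding W_def[abs_def] by (rule solves_reflect[OF Um_sol]) auto
  define Vp where "Vp = Vplus c1 c2 c3"
  define Wp where "Wp = Vplus c2 c1 c3"
  define Vm where "Vm x = - Wp (- x)" for x
  have Vp_sol: "solves_on c1 c2 c3 Vp {-1<..<1}" unfolding Vp_def by (rule Vplus_solves[OF c1 c2 c3])
  have Vp_ag: "\<forall>x\<in>{-1<..<-1+\<delta>p} \<inter> {-1<..<1}. Vp x = Up x"
    unfolding Vp_def by (rule agree_part[OF c1 c2 c3 dp a0 Up_series Up_sol])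
  have Vp_lim: "(Vp \<longlongrightarrow> tau2' c2) (at_left 1)" unfolding Vp_def by (rule Vplus_lim1[OF c1 c2 c3])
  have Vp_gt: "Lf c1 c2 x < Vp x" if "x \<in> {-1<..<1}" for x
    unfolding Vp_def using Vplus_gt[OF c1 c2 c3] that by auto
  have Wp_sol: "solves_on c2 c1 c3 Wp {-1<..<1}" unfolding Wp_def by (rule Vplus_solves[OF c2 c1 c3'])
  have Wp_ag: "\<forall>x\<in>{-1<..<-1+\<delta>m} \<inter> {-1<..<1}. Wp x = W x"
    unfolding Wp_def by (rule agree_part[OF c2 c1 c3' dm b'0 Wser Wsol])
  have Wp_lim: "(Wp \<longlongrightarrow> tau2' c1) (at_left 1)" unfolding Wp_def by (rule Vplus_lim1[OF c2 c1 c3'])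
  have Wp_gt: "Lf c2 c1 x < Wp x" if "x \<in> {-1<..<1}" for x
    unfolding Wp_def using Vplus_gt[OF c2 c1 c3'] that by auto
  have Vm_sol: "solves_on c1 c2 c3 Vm {-1<..<1}"
    unfolding Vm_def[abs_def] by (rule solves_reflect[OF Wp_sol]) auto
  have Vm_ag: "\<forall>x\<in>{1-\<delta>m<..<1} \<inter> {-1<..<1}. Vm x = Um x"
  proof
    fix x assume x: "x \<in> {1-\<delta>m<..<1} \<inter> {-1<..<1}"
    hence "-x \<in> {-1<..<-1+\<delta>m} \<inter> {-1<..<1}" by auto
    hence "Wp (-x) = W (-x)" using Wp_ag by blast
    thus "Vm x = Um x" by (simp add: Vm_def W_def)
  qed
  have Vm_lim: "(Vm \<longlongrightarrow> tau1 c1) (at_right (-1))"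
  proof -
    have "((\<lambda>y. - Wp y) \<longlongrightarrow> - tau2' c1) (at_left 1)" by (intro tendsto_intros Wp_lim)
    hence "((\<lambda>y. Vm (- y)) \<longlongrightarrow> tau1 c1) (at_left 1)" by (simp add: Vm_def tau1_def tau2'_def)
    hence "filterlim Vm (nhds (tau1 c1)) (filtermap (\<lambda>x. - x) (at_left 1))"
      by (simp add: filterlim_filtermap)
    thus ?thesis using at_right_minus[of "-1::real"] by simp
  qed
  have ord: "\<forall>x\<in>{-1<..<1}. Vm x < Vp x"
  proof
    fix x :: real assume x: "x \<in> {-1<..<1}"
    hence "-x \<in> {-1<..<1}" by auto
    hence "Lf c2 c1 (-x) < Wp (-x)" by (rule Wp_gt)
    moreover have "- Lf c2 c1 (-x) = Lf c1 c2 x" by (simp add: Lf_def algebra_simps)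
    ultimately have "Vm x < Lf c1 c2 x" by (simp add: Vm_def)
    thus "Vm x < Vp x" using Vp_gt[OF x] by simp
  qed
  show ?thesis using Vp_sol Vp_ag Vp_lim Vm_sol Vm_ag Vm_lim ord by blast
qed

end
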